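(* Consider the random intersection graph $G(n,m,F)$ defined in the context, with $m=\lfloor\beta n^\alpha\rfloor$ and $p_i=\gamma W_i n^{-(1+\alpha)/2}\wedge 1$, and assume $F$ has finite mean (normalized to $1$). Let $D_i$ be the degree of vertex $i$. Then for every $\alpha>0$, $\mathbf{E}[D_i\mid W_i]\to\beta\gamma^2W_i$ as $n\to\infty$ (i.e. for every fixed value $w>0$ of $W_i$, with the other weights i.i.d. with distribution $F$, the expected degree of $i$ converges to $\beta\gamma^2 w$).
   Context: Model $G(n,m,F)$: fix constants $\alpha,\beta,\gamma>0$ and a probability distribution $F$ on $(0,\infty)$; if $F$ has finite mean it is assumed to have mean $1$. For a positive integer $n$ let $m=\lfloor\beta n^\alpha\rfloor$, let $\mathcal V=\{1,\dots,n\}$ (vertices, "individuals") and $\mathcal A$ a set of $m$ elements ("groups"). Let $W_1,\dots,W_n$ be i.i.d. with distribution $F$ and set $p_i=\gamma W_i n^{-(1+\alpha)/2}\wedge 1$. Conditionally on the weights, form a bipartite graph $B(n,m,F)$ on $\mathcal V\cup\mathcal A$ by including each edge between $i\in\mathcal V$ and $a\in\mathcal A$ independently with probability $p_i$. The graph $G(n,m,F)$ on $\mathcal V$ has an edge between distinct $i,j$ iff some $a\in\mathcal A$ is adjacent to both $i$ and $j$ in $B(n,m,F)$. The parameters $\alpha,\beta,\gamma,F$ do not depend on $n$. *)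

theory Defs
  imports "HOL-Probability.Probability"
begin

definition num_groups :: "real \<Rightarrow> real \<Rightarrow> nat \<Rightarrow> nat" where
  "num_groups \<alpha> \<beta> n = nat \<lfloor>\<beta> * real n powr \<alpha>\<rfloor>"

definition edge_prob :: "real \<Rightarrow> real \<Rightarrow> nat \<Rightarrow> real \<Rightarrow> real" where
  "edge_prob \<alpha> \<gamma> n x = min (\<gamma> * x * real n powr (- (1 + \<alpha>) / 2)) 1"

definition bip_pmf :: "nat \<Rightarrow> nat \<Rightarrow> (nat \<Rightarrow> real) \<Rightarrow> (nat \<times> nat \<Rightarrow> bool) pmf" where
  "bip_pmf n m q = Pi_pmf ({1..n} \<times> {..<m}) False (\<lambda>(i, a). bernoulli_pmf (q i))"

definition int_degree :: "nat \<Rightarrow> nat \<Rightarrow> (nat \<times> nat \<Rightarrow> bool) \<Rightarrow> nat \<Rightarrow> nat" where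
  "int_degree n m B i = card {j \<in> {1..n}. j \<noteq> i \<and> (\<exists>a<m. B (i, a) \<and> B (j, a))}"

text \<open>E[D_i | W_i = w]: weight of i fixed to w, the other weights i.i.d. with law F.\<close>
definition cond_exp_degree ::
  "real \<Rightarrow> real \<Rightarrow> real \<Rightarrow> real measure \<Rightarrow> nat \<Rightarrow> nat \<Rightarrow> real \<Rightarrow> real" where
  "cond_exp_degree \<alpha> \<beta> \<gamma> F n i w =
     (\<integral>W. measure_pmf.expectation
            (bip_pmf n (num_groups \<alpha> \<beta> n) (\<lambda>k. edge_prob \<alpha> \<gamma> n ((W(i := w)) k)))
            (\<lambda>B. real (int_degree n (num_groups \<alpha> \<beta> n) B i))
      \<partial>(PiM ({1..n} - {i}) (\<lambda>_. F)))"

end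

theory Submission
  imports Defs "HOL-Real_Asymp.Real_Asymp"
begin


lemma pmf_integrable_bounded:
  fixes g :: "'c \<Rightarrow> real"
  assumes "\<And>x. 0 \<le> g x" "\<And>x. g x \<le> 1"
  shows "integrable (measure_pmf M) g"
  by (intro measure_pmf.integrable_const_bound[where B=1]) (use assms in auto)

lemma expectation_pair_pmf_iter:
  fixes f :: "'a \<times> 'b \<Rightarrow> real"
  assumes f0: "\<And>x. 0 \<le> f x" and f1: "\<And>x. f x \<le> 1"
  shows "measure_pmf.expectation (pair_pmf A B) f =
         measure_pmf.expectation A (\<lambda>a. measure_pmf.expectation B (\<lambda>b. f (a,b)))"
proof -
  have e0: "0 \<le> measure_pmf.expectation B (\<lambda>b. f (a,b))" for a
    by (intro Bochner_Integration.integral_nonneg f0)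
  have e1: "measure_pmf.expectation B (\<lambda>b. f (a,b)) \<le> 1" for a
  proof -
    have "measure_pmf.expectation B (\<lambda>b. f (a,b)) \<le> measure_pmf.expectation B (\<lambda>b. 1)"
      by (intro integral_mono pmf_integrable_bounded f0 f1) auto
    then show ?thesis by simp
  qed
  have "ennreal (measure_pmf.expectation (pair_pmf A B) f) = (\<integral>\<^sup>+x. ennreal (f x) \<partial>pair_pmf A B)"
    by (intro nn_integral_eq_integral[symmetric] pmf_integrable_bounded f0 f1 AE_I2)
  also have "\<dots> = (\<integral>\<^sup>+a. \<integral>\<^sup>+b. ennreal (f (a,b)) \<partial>B \<partial>A)"
    by (rule nn_integral_pair_pmf')
  also have "\<dots> = (\<integral>\<^sup>+a. ennreal (measure_pmf.expectation B (\<lambda>b. f (a,b))) \<partial>A)"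
    by (intro nn_integral_cong nn_integral_eq_integral pmf_integrable_bounded f0 f1 AE_I2)
  also have "\<dots> = ennreal (measure_pmf.expectation A (\<lambda>a. measure_pmf.expectation B (\<lambda>b. f (a,b))))"
    by (intro nn_integral_eq_integral pmf_integrable_bounded e0 e1 AE_I2)
  finally show ?thesis
    by (subst (asm) ennreal_inj) (auto intro!: Bochner_Integration.integral_nonneg e0 f0)
qed

lemma noedge_prob:
  fixes P :: "nat \<Rightarrow> real"
  assumes ij: "i \<in> {1..n}" "j \<in> {1..n}" "i \<noteq> j" and P0: "\<And>k. 0 \<le> P k" and P1: "\<And>k. P k \<le> 1"
  shows "measure_pmf.expectation (Pi_pmf ({1..n}\<times>{..<m}) False (\<lambda>(k,a). bernoulli_pmf (P k)))
           (\<lambda>B. \<Prod>a<m. (1 - of_bool (B(i,a) \<and> B(j,a)))) = (1 - P i * P j)^m"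
proof -
  define A1 where "A1 = {j}\<times>{..<m}"
  define A2 where "A2 = ({1..n}-{j})\<times>{..<m}"
  define D where "D = (\<lambda>x::nat\<times>nat. bernoulli_pmf (P (fst x)))"
  have fin: "finite A1" "finite A2" unfolding A1_def A2_def by auto
  have AU: "{1..n}\<times>{..<m} = A1 \<union> A2" "A1 \<inter> A2 = {}" using ij unfolding A1_def A2_def by auto
  have "Pi_pmf ({1..n}\<times>{..<m}) False D = map_pmf (\<lambda>(f,g) x. if x \<in> A1 then f x else g x)
             (pair_pmf (Pi_pmf A1 False D) (Pi_pmf A2 False D))"
    unfolding AU(1) by (rule Pi_pmf_union[OF fin AU(2)])
  then have "measure_pmf.expectation (Pi_pmf ({1..n}\<times>{..<m}) False D)
           (\<lambda>B. \<Prod>a<m. (1 - of_bool (B(i,a) \<and> B(j,a)) :: real)) =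
        measure_pmf.expectation (pair_pmf (Pi_pmf A1 False D) (Pi_pmf A2 False D))
           (\<lambda>fg. \<Prod>a<m. (1 - of_bool (snd fg (i,a) \<and> fst fg (j,a))))"
    apply (simp only:)
    apply (subst integral_map_pmf)
    apply (intro Bochner_Integration.integral_cong refl prod.cong)
    using ij by (auto simp: A1_def)
  also have "\<dots> = measure_pmf.expectation (Pi_pmf A1 False D) (\<lambda>f.
        measure_pmf.expectation (Pi_pmf A2 False D) (\<lambda>g. \<Prod>a<m. (1 - of_bool (g (i,a) \<and> f (j,a)))))"
    by (subst expectation_pair_pmf_iter) (auto intro!: prod_nonneg prod_le_1)
  also have "\<dots> = measure_pmf.expectation (Pi_pmf A1 False D) (\<lambda>f. \<Prod>a<m. (1 - P i * of_bool (f (j,a))))"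
  proof (intro Bochner_Integration.integral_cong refl)
    fix f :: "nat \<times> nat \<Rightarrow> bool"
    define h where "h = (\<lambda>x::nat\<times>nat. \<lambda>b. if fst x = i then 1 - of_bool (b \<and> f (j, snd x)) else (1::real))"
    have eqf: "(\<lambda>g. \<Prod>a<m. (1 - of_bool (g (i,a) \<and> f (j,a))) :: real) = (\<lambda>g. \<Prod>x\<in>A2. h x (g x))"
    proof
      fix g :: "nat \<times> nat \<Rightarrow> bool"
      have "(\<Prod>x\<in>A2. h x (g x)) = (\<Prod>x\<in>{x\<in>A2. fst x = i}. 1 - of_bool (g x \<and> f (j, snd x)))"
        unfolding h_def by (subst prod.inter_filter[OF fin(2)]) auto
      also have "{x\<in>A2. fst x = i} = Pair i ` {..<m}" using ij unfolding A2_def by auto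
      also have "(\<Prod>x\<in>Pair i ` {..<m}. 1 - of_bool (g x \<and> f (j, snd x))) = (\<Prod>a<m. (1 - of_bool (g (i,a) \<and> f (j,a))))"
        by (subst prod.reindex) (auto simp: inj_on_def)
      finally show "(\<Prod>a<m. (1 - of_bool (g (i,a) \<and> f (j,a))) :: real) = (\<Prod>x\<in>A2. h x (g x))" ..
    qed
    have "measure_pmf.expectation (Pi_pmf A2 False D) (\<lambda>g. \<Prod>a<m. (1 - of_bool (g (i,a) \<and> f (j,a)))) =
          measure_pmf.expectation (Pi_pmf A2 False D) (\<lambda>g. \<Prod>x\<in>A2. h x (g x))"
      by (simp only: eqf)
    also have "measure_pmf.expectation (Pi_pmf A2 False D) (\<lambda>g. \<Prod>x\<in>A2. h x (g x)) =
               (\<Prod>x\<in>A2. measure_pmf.expectation (D x) (h x))"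
      by (rule expectation_prod_Pi_pmf[OF fin(2)]) (auto simp: h_def intro!: pmf_integrable_bounded)
    also have "\<dots> = (\<Prod>x\<in>A2. if fst x = i then 1 - P i * of_bool (f (j, snd x)) else 1)"
      by (intro prod.cong refl) (auto simp: D_def h_def P0 P1 case_prod_unfold algebra_simps)
    also have "\<dots> = (\<Prod>x\<in>{x\<in>A2. fst x = i}. 1 - P i * of_bool (f (j, snd x)))"
      by (subst prod.inter_filter[OF fin(2)]) auto
    also have "{x\<in>A2. fst x = i} = Pair i ` {..<m}" using ij unfolding A2_def by auto
    also have "(\<Prod>x\<in>Pair i ` {..<m}. 1 - P i * of_bool (f (j, snd x))) = (\<Prod>a<m. 1 - P i * of_bool (f (j,a)))"
      by (subst prod.reindex) (auto simp: inj_on_def)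
    finally show "measure_pmf.expectation (Pi_pmf A2 False D) (\<lambda>g. \<Prod>a<m. (1 - of_bool (g (i,a) \<and> f (j,a)))) =
       (\<Prod>a<m. 1 - P i * of_bool (f (j,a)))" .
  qed
  also have "(\<lambda>f. \<Prod>a<m. (1 - P i * of_bool (f (j,a)))) = (\<lambda>f. \<Prod>x\<in>A1. (\<lambda>b. 1 - P i * of_bool b) (f x))"
  proof -
    have A1P: "A1 = Pair j ` {..<m}" unfolding A1_def by auto
    show ?thesis unfolding A1P by (subst prod.reindex) (auto simp: inj_on_def)
  qed
  also have "measure_pmf.expectation (Pi_pmf A1 False D) \<dots> = (\<Prod>x\<in>A1. measure_pmf.expectation (D x) (\<lambda>b. 1 - P i * of_bool b))"
    by (rule expectation_prod_Pi_pmf[OF fin(1)])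
       (auto intro!: pmf_integrable_bounded mult_le_one simp: P0 P1)
  also have "\<dots> = (\<Prod>x\<in>A1. 1 - P i * P j)"
    by (intro prod.cong refl) (auto simp: D_def A1_def P0 P1 algebra_simps)
  also have "\<dots> = (1 - P i * P j)^m" by (simp add: A1_def)
  finally show ?thesis unfolding D_def by (simp add: case_prod_unfold)
qed

interpretation pmf_as_function .
lemma bern_clamp: "bernoulli_pmf p = bernoulli_pmf (max 0 (min 1 p))"
  by (rule pmf_eqI, transfer) (auto split: split_max split_min)

definition clamp01 :: "real \<Rightarrow> real" where "clamp01 x = max 0 (min 1 x)"

lemma clamp01_bounds [simp]: "0 \<le> clamp01 x" "clamp01 x \<le> 1"
  by (auto simp: clamp01_def)

lemma one_minus_prod_of_bool:
  fixes m :: nat shows "1 - (\<Prod>a<m. (1 - of_bool (Q a) :: real)) = of_bool (\<exists>a<m. Q a)"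
proof (induction m)
  case (Suc m)
  have e: "(\<exists>a<Suc m. Q a) = (Q m \<or> (\<exists>a<m. Q a))" by (auto simp: less_Suc_eq)
  from Suc show ?case unfolding e by (cases "Q m"; cases "\<exists>a<m. Q a") auto
qed simp

lemma card_filter_sum:
  assumes "finite S"
  shows "real (card {j\<in>S. Q j}) = (\<Sum>j\<in>S. of_bool (Q j))"
proof -
  have "real (card {j\<in>S. Q j}) = (\<Sum>j\<in>{j\<in>S. Q j}. 1)" by simp
  also have "\<dots> = (\<Sum>j\<in>S. of_bool (Q j))" using assms by (subst sum.inter_filter) (auto simp: of_bool_def)
  finally show ?thesis .
qed

lemma exp_degree:
  fixes q :: "nat \<Rightarrow> real"
  assumes i: "i \<in> {1..n}"
  shows "measure_pmf.expectation (bip_pmf n m q) (\<lambda>B. real (int_degree n m B i)) =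
         (\<Sum>j\<in>{1..n}-{i}. 1 - (1 - clamp01 (q i) * clamp01 (q j))^m)"
proof -
  define P where "P = (\<lambda>k. clamp01 (q k))"
  have bip: "bip_pmf n m q = Pi_pmf ({1..n}\<times>{..<m}) False (\<lambda>(k,a). bernoulli_pmf (P k))"
    unfolding bip_pmf_def P_def clamp01_def by (subst bern_clamp) (simp add: case_prod_unfold)
  have deg: "real (int_degree n m B i) =
       (\<Sum>j\<in>{1..n}-{i}. 1 - (\<Prod>a<m. (1 - of_bool (B(i,a) \<and> B(j,a)) :: real)))" for B
  proof -
    have "{j \<in> {1..n}. j \<noteq> i \<and> (\<exists>a<m. B (i, a) \<and> B (j, a))} =
          {j \<in> {1..n}-{i}. (\<exists>a<m. B (i, a) \<and> B (j, a))}" (is "_ = ?S") by auto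
    then have "real (int_degree n m B i) = real (card ?S)" unfolding int_degree_def by simp
    also have "\<dots> = (\<Sum>j\<in>{1..n}-{i}. of_bool (\<exists>a<m. B (i, a) \<and> B (j, a)))"
      by (rule card_filter_sum) simp
    finally show ?thesis by (simp only: one_minus_prod_of_bool)
  qed
  have "measure_pmf.expectation (bip_pmf n m q) (\<lambda>B. real (int_degree n m B i)) =
        (\<Sum>j\<in>{1..n}-{i}. measure_pmf.expectation (bip_pmf n m q)
             (\<lambda>B. 1 - (\<Prod>a<m. (1 - of_bool (B(i,a) \<and> B(j,a)) :: real))))"
    unfolding deg
    by (rule Bochner_Integration.integral_sum)
       (auto intro!: pmf_integrable_bounded prod_nonneg prod_le_1 simp: one_minus_prod_of_bool)
  also have "\<dots> = (\<Sum>j\<in>{1..n}-{i}. 1 - (1 - P i * P j)^m)"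
  proof (intro sum.cong refl)
    fix j assume j: "j \<in> {1..n}-{i}"
    have "measure_pmf.expectation (bip_pmf n m q)
             (\<lambda>B. 1 - (\<Prod>a<m. (1 - of_bool (B(i,a) \<and> B(j,a)) :: real))) =
          1 - measure_pmf.expectation (bip_pmf n m q)
             (\<lambda>B. (\<Prod>a<m. (1 - of_bool (B(i,a) \<and> B(j,a)) :: real)))"
      by (subst Bochner_Integration.integral_diff)
         (auto intro!: pmf_integrable_bounded prod_nonneg prod_le_1)
    also have "\<dots> = 1 - (1 - P i * P j)^m"
      unfolding bip using i j by (subst noedge_prob) (auto simp: P_def)
    finally show "measure_pmf.expectation (bip_pmf n m q)
             (\<lambda>B. 1 - (\<Prod>a<m. (1 - of_bool (B(i,a) \<and> B(j,a)) :: real))) = 1 - (1 - P i * P j)^m" .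
  qed
  finally show ?thesis by (simp add: P_def)
qed



lemma pow_upper:
  fixes t :: real assumes "0 \<le> t" "t \<le> 1"
  shows "1 - (1-t)^m \<le> real m * t"
  using Bernoulli_inequality[of "-t" m] assms by simp

lemma pow_lower:
  fixes t :: real assumes t: "0 \<le> t" "t \<le> 1"
  shows "real m * t * (1 - real m * t) \<le> 1 - (1-t)^m"
proof (cases m)
  case 0 then show ?thesis by simp
next
  case (Suc k)
  have eq: "1 - (1-t)^m = t * (\<Sum>j<m. (1-t)^j)"
    using one_diff_power_eq[of "1-t" m] by simp
  have "(\<Sum>j<m. (1-t)^j) \<ge> (\<Sum>j<m. (1-t)^k)"
    by (intro sum_mono power_decreasing) (use t Suc in auto)
  hence "t * (\<Sum>j<m. (1-t)^j) \<ge> t * (real m * (1-t)^k)"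
    using t by (intro mult_left_mono) auto
  moreover have "(1-t)^k \<ge> 1 - real k * t"
    using Bernoulli_inequality[of "-t" k] t by simp
  moreover have "1 - real k * t \<ge> 1 - real m * t" using Suc t by (simp add: mult_right_mono)
  ultimately have "t * (\<Sum>j<m. (1-t)^j) \<ge> t * (real m * (1 - real m * t))"
    using t by (smt (verit, best) mult_left_mono of_nat_0_le_iff)
  then show ?thesis unfolding eq by (simp add: algebra_simps)
qed

lemma M_bounds:
  assumes "\<beta> > 0"
  shows "real (num_groups \<alpha> \<beta> n) \<le> \<beta> * real n powr \<alpha>"
        "\<beta> * real n powr \<alpha> - 1 \<le> real (num_groups \<alpha> \<beta> n)"
proof -
  have nn: "0 \<le> \<beta> * real n powr \<alpha>" using assms by simp
  show "real (num_groups \<alpha> \<beta> n) \<le> \<beta> * real n powr \<alpha>"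
    unfolding num_groups_def using nn by (simp add: of_nat_nat)
  show "\<beta> * real n powr \<alpha> - 1 \<le> real (num_groups \<alpha> \<beta> n)"
    unfolding num_groups_def using nn by (simp add: of_nat_nat)
qed

lemma powr_cancel:
  assumes "n > 0"
  shows "real n powr \<alpha> * real n powr (-(1+\<alpha>)) = 1 / real n"
  using assms by (simp add: powr_add[symmetric] powr_minus divide_inverse)

lemma lim_M:
  assumes a: "\<alpha> > 0" and b: "\<beta> > 0"
  shows "(\<lambda>n. real (n-1) * real (num_groups \<alpha> \<beta> n) * real n powr (-(1+\<alpha>))) \<longlonglongrightarrow> \<beta>"
proof (rule tendsto_sandwich)
  have l1: "(\<lambda>n. \<beta> * (1 - 1 / real n)) \<longlonglongrightarrow> \<beta>" by real_asymp
  have l2: "(\<lambda>n::nat. real n powr (-\<alpha>)) \<longlonglongrightarrow> 0"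
    using a by (intro tendsto_neg_powr filterlim_real_sequentially) auto
  show "(\<lambda>n. \<beta> * (1 - 1 / real n) - real n powr (-\<alpha>)) \<longlonglongrightarrow> \<beta>"
    using tendsto_diff[OF l1 l2] by simp
  show "(\<lambda>n. \<beta> * (1 - 1 / real n)) \<longlonglongrightarrow> \<beta>" by (fact l1)
  show "eventually (\<lambda>n. real (n-1) * real (num_groups \<alpha> \<beta> n) * real n powr (-(1+\<alpha>)) \<le> \<beta> * (1 - 1 / real n)) sequentially"
    using eventually_gt_at_top[of 0]
  proof eventually_elim
    case (elim n)
    have "real (n-1) * real (num_groups \<alpha> \<beta> n) * real n powr (-(1+\<alpha>)) \<le>
          real (n-1) * (\<beta> * real n powr \<alpha>) * real n powr (-(1+\<alpha>))"
      by (intro mult_right_mono mult_left_mono M_bounds b) auto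
    also have "\<dots> = \<beta> * real (n-1) * (real n powr \<alpha> * real n powr (-(1+\<alpha>)))"
      by (simp only: mult_ac)
    also have "\<dots> = \<beta> * (real (n-1) / real n)"
      by (simp only: powr_cancel[OF elim]) simp
    also have "\<dots> = \<beta> * (1 - 1 / real n)" using elim by (simp add: of_nat_diff field_simps)
    finally show ?case .
  qed
  show "eventually (\<lambda>n. \<beta> * (1 - 1 / real n) - real n powr (-\<alpha>) \<le> real (n-1) * real (num_groups \<alpha> \<beta> n) * real n powr (-(1+\<alpha>))) sequentially"
    using eventually_gt_at_top[of 0]
  proof eventually_elim
    case (elim n)
    have p: "real n powr (-(1+\<alpha>)) \<ge> 0" by simp
    have "real (n-1) * (\<beta> * real n powr \<alpha> - 1) * real n powr (-(1+\<alpha>)) \<le>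
          real (n-1) * real (num_groups \<alpha> \<beta> n) * real n powr (-(1+\<alpha>))"
      by (intro mult_right_mono mult_left_mono M_bounds b) auto
    moreover have "real (n-1) * (\<beta> * real n powr \<alpha> - 1) * real n powr (-(1+\<alpha>)) =
         \<beta> * real (n-1) * (real n powr \<alpha> * real n powr (-(1+\<alpha>))) - real (n-1) * real n powr (-(1+\<alpha>))"
      by (simp add: algebra_simps)
    moreover have "\<beta> * real (n-1) * (real n powr \<alpha> * real n powr (-(1+\<alpha>))) = \<beta> * (1 - 1 / real n)"
      using elim by (simp only: powr_cancel[OF elim]) (simp add: of_nat_diff field_simps)
    moreover have "real (n-1) * real n powr (-(1+\<alpha>)) \<le> real n * real n powr (-(1+\<alpha>))"
      by (intro mult_right_mono) auto
    moreover have "real n * real n powr (-(1+\<alpha>)) = real n powr (-\<alpha>)"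
      using elim by (simp add: powr_add[symmetric] powr_minus field_simps powr_mult_base)
    ultimately show ?case by linarith
  qed
qed

lemma lim_M0:
  assumes a: "\<alpha> > 0" and b: "\<beta> > 0"
  shows "(\<lambda>n. real (num_groups \<alpha> \<beta> n) * real n powr (-(1+\<alpha>))) \<longlonglongrightarrow> 0"
proof (rule tendsto_sandwich)
  show "(\<lambda>n. 0) \<longlonglongrightarrow> (0::real)" by simp
  show "(\<lambda>n. \<beta> / real n) \<longlonglongrightarrow> 0" by real_asymp
  show "eventually (\<lambda>n. 0 \<le> real (num_groups \<alpha> \<beta> n) * real n powr (-(1+\<alpha>))) sequentially" by simp
  show "eventually (\<lambda>n. real (num_groups \<alpha> \<beta> n) * real n powr (-(1+\<alpha>)) \<le> \<beta> / real n) sequentially"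
    using eventually_gt_at_top[of 0]
  proof eventually_elim
    case (elim n)
    have "real (num_groups \<alpha> \<beta> n) * real n powr (-(1+\<alpha>)) \<le> (\<beta> * real n powr \<alpha>) * real n powr (-(1+\<alpha>))"
      by (intro mult_right_mono M_bounds b) auto
    also have "\<dots> = \<beta> * (real n powr \<alpha> * real n powr (-(1+\<alpha>)))" by (simp only: mult_ac)
    also have "\<dots> = \<beta> / real n" by (simp only: powr_cancel[OF elim]) simp
    finally show ?case .
  qed
qed


lemma PiM_coord:
  fixes f :: "real \<Rightarrow> real"
  assumes F: "prob_space F" and j: "j \<in> I" and fm: "f \<in> borel_measurable F"
    and fb: "\<And>x. 0 \<le> f x" "\<And>x. f x \<le> 1"
  shows "integrable (PiM I (\<lambda>_. F)) (\<lambda>W. f (W j))"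
        "(\<integral>W. f (W j) \<partial>PiM I (\<lambda>_. F)) = (\<integral>x. f x \<partial>F)"
proof -
  have d: "distr (PiM I (\<lambda>_. F)) F (\<lambda>W. W j) = F"
    using F j by (intro distr_PiM_component) auto
  have m: "(\<lambda>W. W j) \<in> measurable (PiM I (\<lambda>_. F)) F"
    using j by (rule measurable_component_singleton)
  have "integrable F f"
    using F fm fb by (intro finite_measure.integrable_const_bound[where B=1] prob_space.finite_measure) auto
  then have "integrable (distr (PiM I (\<lambda>_. F)) F (\<lambda>W. W j)) f" by (simp add: d)
  then show "integrable (PiM I (\<lambda>_. F)) (\<lambda>W. f (W j))"
    using integrable_distr_eq[OF m fm] by simp
  have "(\<integral>x. f x \<partial>F) = (\<integral>x. f x \<partial>distr (PiM I (\<lambda>_. F)) F (\<lambda>W. W j))" by (simp add: d)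
  also have "\<dots> = (\<integral>W. f (W j) \<partial>PiM I (\<lambda>_. F))" by (rule integral_distr[OF m fm])
  finally show "(\<integral>W. f (W j) \<partial>PiM I (\<lambda>_. F)) = (\<integral>x. f x \<partial>F)" ..
qed

lemma M_upper:
  assumes b: "\<beta> > 0"
  shows "real (n-1) * real (num_groups \<alpha> \<beta> n) * real n powr (-(1+\<alpha>)) \<le> \<beta>"
proof (cases "n = 0")
  case True then show ?thesis using b by simp
next
  case False
  then have n: "n > 0" by simp
  have "real (n-1) * real (num_groups \<alpha> \<beta> n) * real n powr (-(1+\<alpha>)) \<le>
        real n * (\<beta> * real n powr \<alpha>) * real n powr (-(1+\<alpha>))"
    by (intro mult_right_mono mult_mono M_bounds b) auto
  also have "\<dots> = \<beta> * real n * (real n powr \<alpha> * real n powr (-(1+\<alpha>)))" by (simp only: mult_ac)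
  also have "\<dots> = \<beta>" using n by (simp only: powr_cancel[OF n]) simp
  finally show ?thesis .
qed

lemma a_sq: "real n powr (-(1+\<alpha>)/2) * real n powr (-(1+\<alpha>)/2) = real n powr (-(1+\<alpha>))"
  by (simp add: powr_add[symmetric])

lemma clamp_le: "clamp01 (min y 1) \<le> max 0 y"
  by (auto simp: clamp01_def)

theorem proposition1p1:
  fixes \<alpha> \<beta> \<gamma> w :: real and F :: "real measure" and i :: nat
  assumes "\<alpha> > 0" and "\<beta> > 0" and "\<gamma> > 0"
    and "prob_space F" and "sets F = sets borel"
    and "AE x in F. x > 0"
    and "integrable F (\<lambda>x. x)" and "(\<integral>x. x \<partial>F) = 1"
    and "i \<ge> 1" and "w > 0"
  shows "(\<lambda>n. cond_exp_degree \<alpha> \<beta> \<gamma> F n i w) \<longlonglongrightarrow> \<beta> * \<gamma>\<^sup>2 * w"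
proof -
  note a0 = assms(1) and b0 = assms(2) and g0 = assms(3) and F = assms(4) and sF = assms(5)
    and pos = assms(6) and intx = assms(7) and Ex = assms(8) and i1 = assms(9) and w0 = assms(10)
  define M where "M n = num_groups \<alpha> \<beta> n" for n
  define ep where "ep n x = clamp01 (edge_prob \<alpha> \<gamma> n x)" for n x
  define g where "g n x = 1 - (1 - ep n w * ep n x)^(M n)" for n x
  define a where "a n = real n powr (-(1+\<alpha>)/2)" for n :: nat
  define L where "L = \<beta> * \<gamma>\<^sup>2 * w"
  have ep01: "0 \<le> ep n x" "ep n x \<le> 1" for n x by (auto simp: ep_def)
  have p01: "0 \<le> ep n w * ep n x" "ep n w * ep n x \<le> 1" for n x
    using ep01 by (auto intro: mult_le_one)
  have g01: "0 \<le> g n x" "g n x \<le> 1" for n x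
    unfolding g_def using p01[of n x] by (auto intro!: power_le_one)
  have gmeas_borel: "g n \<in> borel_measurable borel" for n
    unfolding g_def[abs_def] ep_def clamp01_def edge_prob_def by measurable
  have gmeas: "g n \<in> borel_measurable F" for n
    using gmeas_borel measurable_cong_sets[OF sF refl] by blast

  have step1: "eventually (\<lambda>n. cond_exp_degree \<alpha> \<beta> \<gamma> F n i w = real (n-1) * (\<integral>x. g n x \<partial>F)) sequentially"
    using eventually_ge_at_top[of i]
  proof eventually_elim
    case (elim n)
    have iin: "i \<in> {1..n}" using elim i1 by auto
    have inner: "measure_pmf.expectation
            (bip_pmf n (num_groups \<alpha> \<beta> n) (\<lambda>k. edge_prob \<alpha> \<gamma> n ((W(i := w)) k)))
            (\<lambda>B. real (int_degree n (num_groups \<alpha> \<beta> n) B i)) = (\<Sum>j\<in>{1..n}-{i}. g n (W j))" for W :: "nat \<Rightarrow> real"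
      by (subst exp_degree[OF iin]) (auto intro!: sum.cong simp: g_def ep_def M_def)
    have "cond_exp_degree \<alpha> \<beta> \<gamma> F n i w = (\<integral>W. (\<Sum>j\<in>{1..n}-{i}. g n (W j)) \<partial>PiM ({1..n} - {i}) (\<lambda>_. F))"
      unfolding cond_exp_degree_def inner ..
    also have "\<dots> = (\<Sum>j\<in>{1..n}-{i}. (\<integral>W. g n (W j) \<partial>PiM ({1..n} - {i}) (\<lambda>_. F)))"
      by (rule Bochner_Integration.integral_sum) (intro PiM_coord(1)[OF F _ gmeas g01]; simp)
    also have "\<dots> = (\<Sum>j\<in>{1..n}-{i}. (\<integral>x. g n x \<partial>F))"
      by (intro sum.cong refl PiM_coord(2)[OF F _ gmeas g01]) simp
    also have "\<dots> = real (n-1) * (\<integral>x. g n x \<partial>F)"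
      using iin by simp
    finally show ?case .
  qed

  have a_lim: "a \<longlonglongrightarrow> 0"
    unfolding a_def using a0 by (intro tendsto_neg_powr filterlim_real_sequentially) auto
  have a_nn: "0 \<le> a n" for n by (simp add: a_def)
  have ep_le: "ep n x \<le> \<gamma> * \<bar>x\<bar> * a n" for n x
  proof -
    have "ep n x \<le> max 0 (\<gamma> * x * a n)"
      unfolding ep_def edge_prob_def a_def by (rule clamp_le)
    also have "\<dots> \<le> \<gamma> * \<bar>x\<bar> * a n"
      using g0 a_nn[of n] by (auto intro!: mult_right_mono mult_left_mono)
    finally show ?thesis .
  qed
  have ep_eq: "ep n x = \<gamma> * x * a n" if "0 < x" "\<gamma> * x * a n \<le> 1" for n x
    using that g0 a_nn[of n] unfolding ep_def edge_prob_def a_def clamp01_def by auto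

  define s where "s n x = real (n-1) * g n x" for n x
  have bound: "norm (s n x) \<le> L * \<bar>x\<bar>" for n x
  proof -
    have "ep n w * ep n x \<le> (\<gamma> * \<bar>w\<bar> * a n) * (\<gamma> * \<bar>x\<bar> * a n)"
      by (intro mult_mono ep_le ep01) (use g0 a_nn[of n] in auto)
    also have "\<dots> = \<gamma>\<^sup>2 * w * \<bar>x\<bar> * (a n * a n)"
      using w0 by (simp add: power2_eq_square algebra_simps)
    also have "a n * a n = real n powr (-(1+\<alpha>))" unfolding a_def by (rule a_sq)
    finally have pb: "ep n w * ep n x \<le> \<gamma>\<^sup>2 * w * \<bar>x\<bar> * real n powr (-(1+\<alpha>))" .
    have "norm (s n x) = real (n-1) * g n x" using g01[of n x] by (simp add: s_def)
    also have "\<dots> \<le> real (n-1) * (real (M n) * (ep n w * ep n x))"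
      unfolding g_def by (intro mult_left_mono pow_upper p01) auto
    also have "\<dots> \<le> real (n-1) * (real (M n) * (\<gamma>\<^sup>2 * w * \<bar>x\<bar> * real n powr (-(1+\<alpha>))))"
      by (intro mult_left_mono pb) auto
    also have "\<dots> = (real (n-1) * real (M n) * real n powr (-(1+\<alpha>))) * (\<gamma>\<^sup>2 * w * \<bar>x\<bar>)"
      by (simp only: mult_ac)
    also have "\<dots> \<le> \<beta> * (\<gamma>\<^sup>2 * w * \<bar>x\<bar>)"
      unfolding M_def by (intro mult_right_mono M_upper b0) (use w0 in auto)
    also have "\<dots> = L * \<bar>x\<bar>" by (simp add: L_def)
    finally show ?thesis .
  qed

  have pointwise: "(\<lambda>n. s n x) \<longlonglongrightarrow> L * x" if x0: "x > 0" for x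
  proof -
    define K where "K = \<gamma>\<^sup>2 * w * x"
    have K0: "K > 0" using g0 w0 x0 by (simp add: K_def)
    have ev1: "eventually (\<lambda>n. a n < 1 / (\<gamma> * w)) sequentially"
      using order_tendstoD(2)[OF a_lim, of "1/(\<gamma>*w)"] g0 w0 by simp
    have ev2: "eventually (\<lambda>n. a n < 1 / (\<gamma> * x)) sequentially"
      using order_tendstoD(2)[OF a_lim, of "1/(\<gamma>*x)"] g0 x0 by simp
    have prod_eq: "eventually (\<lambda>n. ep n w * ep n x = K * real n powr (-(1+\<alpha>))) sequentially"
      using ev1 ev2
    proof eventually_elim
      case (elim n)
      have "\<gamma> * w * a n \<le> 1" using elim(1) g0 w0 by (simp add: field_simps)
      moreover have "\<gamma> * x * a n \<le> 1" using elim(2) g0 x0 by (simp add: field_simps)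
      ultimately have "ep n w * ep n x = (\<gamma> * w * a n) * (\<gamma> * x * a n)"
        using ep_eq x0 w0 by simp
      also have "\<dots> = K * (a n * a n)" by (simp add: K_def power2_eq_square algebra_simps)
      also have "a n * a n = real n powr (-(1+\<alpha>))" unfolding a_def by (rule a_sq)
      finally show ?case .
    qed
    define U where "U n = K * (real (n-1) * real (M n) * real n powr (-(1+\<alpha>)))" for n
    define V where "V n = K * (real (M n) * real n powr (-(1+\<alpha>)))" for n
    have U_lim: "U \<longlonglongrightarrow> K * \<beta>"
      unfolding U_def M_def by (intro tendsto_mult tendsto_const lim_M a0 b0)
    have V_lim: "V \<longlonglongrightarrow> 0"
      unfolding V_def M_def using tendsto_mult[OF tendsto_const[of K] lim_M0[OF a0 b0]] by simp
    have "(\<lambda>n. U n * (1 - V n)) \<longlonglongrightarrow> K * \<beta> * (1 - 0)"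
      by (intro tendsto_mult U_lim tendsto_diff tendsto_const V_lim)
    then have low: "(\<lambda>n. U n * (1 - V n)) \<longlonglongrightarrow> L * x" by (simp add: K_def L_def algebra_simps)
    have up: "U \<longlonglongrightarrow> L * x" using U_lim by (simp add: K_def L_def algebra_simps)
    show ?thesis
    proof (rule tendsto_sandwich[OF _ _ low up])
      show "eventually (\<lambda>n. U n * (1 - V n) \<le> s n x) sequentially"
        using prod_eq
      proof eventually_elim
        case (elim n)
        have "real (M n) * (ep n w * ep n x) * (1 - real (M n) * (ep n w * ep n x)) \<le> g n x"
          unfolding g_def by (intro pow_lower p01)
        then have "real (n-1) * (real (M n) * (ep n w * ep n x) * (1 - real (M n) * (ep n w * ep n x))) \<le> s n x"
          unfolding s_def by (intro mult_left_mono) auto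
        then show ?case unfolding elim U_def V_def by (simp add: algebra_simps)
      qed
      show "eventually (\<lambda>n. s n x \<le> U n) sequentially"
        using prod_eq
      proof eventually_elim
        case (elim n)
        have "g n x \<le> real (M n) * (ep n w * ep n x)"
          unfolding g_def by (intro pow_upper p01)
        then have "s n x \<le> real (n-1) * (real (M n) * (ep n w * ep n x))"
          unfolding s_def by (intro mult_left_mono) auto
        then show ?case unfolding elim U_def by (simp add: algebra_simps)
      qed
    qed
  qed

  have intL: "integrable F (\<lambda>x. L * \<bar>x\<bar>)"
    using intx by (intro integrable_mult_right integrable_abs)
  have lin_meas: "(\<lambda>x. L * x) \<in> borel_measurable F"
    using borel_measurable_integrable[OF intx] by measurable
  have "(\<lambda>n. integral\<^sup>L F (s n)) \<longlonglongrightarrow> integral\<^sup>L F (\<lambda>x. L * x)"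
  proof (rule integral_dominated_convergence[OF lin_meas _ intL])
    show "s n \<in> borel_measurable F" for n
      unfolding s_def[abs_def] using gmeas[of n] by measurable
    show "AE x in F. (\<lambda>n. s n x) \<longlonglongrightarrow> L * x"
      using pos by eventually_elim (rule pointwise)
    show "AE x in F. norm (s n x) \<le> L * \<bar>x\<bar>" for n
      by (intro AE_I2 bound)
  qed
  moreover have "integral\<^sup>L F (\<lambda>x. L * x) = L" using Ex by simp
  moreover have "integral\<^sup>L F (s n) = real (n-1) * (\<integral>x. g n x \<partial>F)" for n
    unfolding s_def by simp
  ultimately have "(\<lambda>n. real (n-1) * (\<integral>x. g n x \<partial>F)) \<longlonglongrightarrow> L" by (simp add: Ex)
  moreover have "eventually (\<lambda>n. real (n-1) * (\<integral>x. g n x \<partial>F) = cond_exp_degree \<alpha> \<beta> \<gamma> F n i w) sequentially"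
    using step1 by (simp add: eq_commute)
  ultimately show ?thesis
    unfolding L_def[symmetric] by (rule Lim_transform_eventually)
qed

end
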